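(* Let $u$ be a word over a finite alphabet and let $v$ be a run in $u$, with shortest period $p$ and exponent $\sigma(v)$. If $p=1$, then $\sigma(v)=|H(v)|+1$. If $p\ge 2$, then $\lceil \sigma(v)\rceil \le \frac{|H(v)|}{2}+3$.
   Context: For a word $u=u_1\cdots u_m$, the (shortest) period is the smallest positive integer $p$ with $u_i=u_{i+p}$ for all $1\le i\le m-p$; $u[i..j]=u_i\cdots u_j$. A run in $u$ is an interval $[i..j]$ such that the period $p$ of $u[i..j]$ satisfies $2p\le j-i+1$, and $u[i-1]\ne u[i+p-1]$ (or $i=1$) and $u[j-p+1]\ne u[j+1]$ (or $j=|u|$); its exponent is $\sigma(v)=(j-i+1)/p$. Words $x,y$ are cyclically equivalent if $x=st$, $y=ts$ for some words $s,t$. The inter-positions of $u$ are the $|u|-1$ positions lying between consecutive letters of $u$. Handles: for a run $v$ with period $p$, let $w$ be the prefix of (the factor) $v$ of length $p$, and let $w_{\min}$, $w_{\max}$ be the lexicographically minimal and maximal words cyclically equivalent to $w$. Then $H(v)$ is the set of inter-positions defined by: (a) if $w_{\min}=w_{\max}$, $H(v)$ consists of all inter-positions lying within $v$; (b) if $w_{\min}\ne w_{\max}$, $H(v)$ consists of the inter-positions lying between two consecutive (adjacent) occurrences of $w_{\min}$ inside $v$ and those lying between two consecutive occurrences of $w_{\max}$ inside $v$. *)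

theory Defs
  imports Complex_Main "HOL-Library.List_Lexorder"
begin

(* Words are lists; positions in the paper are 1-based: u_k = u ! (k - 1). *)

definition letter :: "'a list \<Rightarrow> nat \<Rightarrow> 'a" where
  "letter u k = u ! (k - 1)"

(* u[i..j] = u_i ... u_j  (1-based, i \<le> j) *)
definition factor :: "'a list \<Rightarrow> nat \<Rightarrow> nat \<Rightarrow> 'a list" where
  "factor u i j = take (Suc j - i) (drop (i - 1) u)"

definition is_period :: "'a list \<Rightarrow> nat \<Rightarrow> bool" where
  "is_period w p \<longleftrightarrow> 0 < p \<and> (\<forall>k. k + p < length w \<longrightarrow> w ! k = w ! (k + p))"

definition period :: "'a list \<Rightarrow> nat" where
  "period w = (LEAST p. is_period w p)"

definition is_run :: "'a list \<Rightarrow> nat \<Rightarrow> nat \<Rightarrow> bool" where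
  "is_run u i j \<longleftrightarrow> 1 \<le> i \<and> i \<le> j \<and> j \<le> length u \<and>
     (let p = period (factor u i j) in
        2 * p \<le> Suc j - i \<and>
        (i = 1 \<or> letter u (i - 1) \<noteq> letter u (i + p - 1)) \<and>
        (j = length u \<or> letter u (j - p + 1) \<noteq> letter u (j + 1)))"

definition run_exponent :: "'a list \<Rightarrow> nat \<Rightarrow> nat \<Rightarrow> real" where
  "run_exponent u i j = real (Suc j - i) / real (period (factor u i j))"

definition cyc_class :: "'a list \<Rightarrow> 'a list set" where
  "cyc_class w = {x. \<exists>s t. w = s @ t \<and> x = t @ s}"

(* lexicographically minimal / maximal conjugates (lexicographic order of List_Lexorder) *)
definition w_min :: "'a::linorder list \<Rightarrow> 'a list" where
  "w_min w = Min (cyc_class w)"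

definition w_max :: "'a::linorder list \<Rightarrow> 'a list" where
  "w_max w = Max (cyc_class w)"

definition occ_in :: "'a list \<Rightarrow> nat \<Rightarrow> nat \<Rightarrow> 'a list \<Rightarrow> nat \<Rightarrow> bool" where
  "occ_in u i j x q \<longleftrightarrow> i \<le> q \<and> q + length x - 1 \<le> j \<and> factor u q (q + length x - 1) = x"

(* inter-position k lies between letters u_k and u_{k+1}, 1 \<le> k \<le> |u|-1.
   Inter-positions lying between two consecutive (adjacent) occurrences of x inside [i..j]:
   an occurrence ends at u_k and the next one starts at u_{k+1}. *)
definition between_occs :: "'a list \<Rightarrow> nat \<Rightarrow> nat \<Rightarrow> 'a list \<Rightarrow> nat set" where
  "between_occs u i j x =
     {k. \<exists>q. occ_in u i j x q \<and> occ_in u i j x (q + length x) \<and> k = q + length x - 1}"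

definition handles :: "'a::linorder list \<Rightarrow> nat \<Rightarrow> nat \<Rightarrow> nat set" where
  "handles u i j =
     (let w = take (period (factor u i j)) (factor u i j) in
      if w_min w = w_max w then {k. i \<le> k \<and> k < j}
      else between_occs u i j (w_min w) \<union> between_occs u i j (w_max w))"

end

theory Submission
  imports Defs
begin

lemma period_mod:
  assumes "is_period w p" "k < length w"
  shows "w ! k = w ! (k mod p)"
  using assms(2)
proof (induction k rule: less_induct)
  case (less k)
  have p0: "0 < p" using assms(1) unfolding is_period_def by auto
  show ?case
  proof (cases "k < p")
    case True then show ?thesis by simp
  next
    case False
    then have "k - p < k" using p0 by auto
    then have "w ! (k - p) = w ! ((k - p) mod p)" using less by auto
    moreover have "w ! (k - p) = w ! (k - p + p)"
      using assms(1) less.prems False unfolding is_period_def by auto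
    moreover have "(k - p) mod p = k mod p" using False by (simp add: mod_if)
    ultimately show ?thesis using False by simp
  qed
qed

lemma cyc_class_eq: "cyc_class w = (\<lambda>n. rotate n w) ` {..length w}"
proof
  show "cyc_class w \<subseteq> (\<lambda>n. rotate n w) ` {..length w}"
  proof
    fix x assume "x \<in> cyc_class w"
    then obtain s t where "w = s @ t" "x = t @ s" unfolding cyc_class_def by auto
    then have "x = rotate (length s) w" by (simp add: rotate_append)
    moreover have "length s \<le> length w" using \<open>w = s @ t\<close> by simp
    ultimately show "x \<in> (\<lambda>n. rotate n w) ` {..length w}" by auto
  qed
next
  show "(\<lambda>n. rotate n w) ` {..length w} \<subseteq> cyc_class w"
  proof
    fix x assume "x \<in> (\<lambda>n. rotate n w) ` {..length w}"
    then obtain n where n: "n \<le> length w" "x = rotate n w" by auto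
    have "w = take n w @ drop n w" by simp
    moreover have "x = drop n w @ take n w"
      using n by (metis append_take_drop_id length_take min_absorb2 rotate_append)
    ultimately show "x \<in> cyc_class w" unfolding cyc_class_def by blast
  qed
qed

lemma cyc_class_finite: "finite (cyc_class w)"
  by (simp add: cyc_class_eq)

lemma cyc_class_rot:
  assumes "x \<in> cyc_class w" "w \<noteq> []"
  shows "\<exists>r < length w. x = rotate r w"
proof -
  obtain n where "x = rotate n w" using assms(1) by (auto simp: cyc_class_eq)
  then have "x = rotate (n mod length w) w" by (metis rotate_conv_mod)
  moreover have "n mod length w < length w" using assms(2) by simp
  ultimately show ?thesis by blast
qed

lemma rot_in_cyc: "rotate n w \<in> cyc_class w"
proof -
  have "rotate n w = rotate (n mod length w) w" by (metis rotate_conv_mod)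
  moreover have "n mod length w \<le> length w \<or> w = []" by (auto simp: less_imp_le)
  ultimately show ?thesis by (auto simp: cyc_class_eq)
qed


theorem lemma1:
  fixes u :: "'a::{linorder, finite} list" and i j :: nat
  assumes "is_run u i j"
  shows "(period (factor u i j) = 1 \<longrightarrow>
            run_exponent u i j = real (card (handles u i j)) + 1)
       \<and> (period (factor u i j) \<ge> 2 \<longrightarrow>
            real_of_int \<lceil>run_exponent u i j\<rceil> \<le> real (card (handles u i j)) / 2 + 3)"
proof -
  define v where "v = factor u i j"
  define p where "p = period v"
  define L where "L = Suc j - i"
  define w where "w = take p v"
  have i1: "1 \<le> i" and ij: "i \<le> j" and ju: "j \<le> length u" and p2L: "2 * p \<le> L"
    using assms unfolding is_run_def Let_def p_def v_def L_def by auto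
  have lenv: "length v = L" unfolding v_def factor_def L_def using i1 ij ju by auto
  have vnth: "v ! t = u ! (i - 1 + t)" if "t < L" for t
    using that i1 ij ju unfolding v_def factor_def L_def by auto
  have L0: "0 < L" unfolding L_def using ij by simp
  have "is_period v L" unfolding is_period_def using lenv L0 by auto
  then have pper: "is_period v p" unfolding p_def period_def by (rule LeastI)
  then have p0: "0 < p" unfolding is_period_def by auto
  have pmin: "p \<le> q" if "is_period v q" for q
    unfolding p_def period_def using that by (rule Least_le)
  have vmod: "v ! t = v ! (t mod p)" if "t < L" for t
    using period_mod[OF pper] that lenv by auto
  have lenw: "length w = p" unfolding w_def using lenv p2L by auto
  have wnth: "w ! t = v ! t" if "t < p" for t unfolding w_def using that by simp
  have H_def': "handles u i j = (if w_min w = w_max w then {k. i \<le> k \<and> k < j}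
      else between_occs u i j (w_min w) \<union> between_occs u i j (w_max w))"
    unfolding handles_def Let_def w_def p_def v_def by simp
  show ?thesis
  proof (intro conjI impI)
    assume p1: "period (factor u i j) = 1"
    then have "p = 1" unfolding p_def v_def by simp
    then obtain a where wa: "w = [a]" using lenw by (cases w) auto
    have "cyc_class w = {w}" unfolding cyc_class_def wa
      by (auto simp: Cons_eq_append_conv)
    then have "w_min w = w_max w" unfolding w_min_def w_max_def by simp
    then have "handles u i j = {k. i \<le> k \<and> k < j}" using H_def' by simp
    moreover have "{k. i \<le> k \<and> k < j} = {i..<j}" by auto
    ultimately have "card (handles u i j) = j - i" by simp
    then show "run_exponent u i j = real (card (handles u i j)) + 1"
      unfolding run_exponent_def using p1 ij by simp
  next
    assume p2': "2 \<le> period (factor u i j)"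
    then have p2: "2 \<le> p" unfolding p_def v_def by simp
    have wne: "w \<noteq> []" using lenw p0 by auto
    have fin: "finite (cyc_class w)" by (rule cyc_class_finite)
    have wcyc: "w \<in> cyc_class w" using rot_in_cyc[of 0 w] by simp
    have rot1: "rotate 1 w \<in> cyc_class w" by (rule rot_in_cyc)
    have neq: "w_min w \<noteq> w_max w"
    proof
      assume eq: "w_min w = w_max w"
      have "Min (cyc_class w) \<le> w" "Min (cyc_class w) \<le> rotate 1 w"
        "w \<le> Max (cyc_class w)" "rotate 1 w \<le> Max (cyc_class w)"
        using fin wcyc rot1 by auto
      then have r1: "rotate 1 w = w" using eq unfolding w_min_def w_max_def by auto
      have "is_period v 1" unfolding is_period_def
      proof (intro conjI allI impI)
        fix k assume k: "k + 1 < length v"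
        have "v ! k = w ! (k mod p)" using vmod[of k] wnth[of "k mod p"] k lenv p0 by simp
        moreover have "v ! (k+1) = w ! ((k+1) mod p)"
          using vmod[of "k+1"] wnth[of "(k+1) mod p"] k lenv p0 by simp
        moreover have "rotate 1 w ! (k mod p) = w ! ((1 + k mod p) mod p)"
          using nth_rotate[of "k mod p" w 1] lenw p0 by simp
        moreover have "(1 + k mod p) mod p = (k+1) mod p" by (simp add: mod_simps)
        ultimately show "v ! k = v ! (k + 1)" using r1 by simp
      qed simp
      then show False using pmin p2 by fastforce
    qed
    have "w_min w \<in> cyc_class w" unfolding w_min_def using fin wcyc by (intro Min_in) auto
    then obtain r where r: "r < p" "w_min w = rotate r w" using cyc_class_rot wne lenw by blast
    have "w_max w \<in> cyc_class w" unfolding w_max_def using fin wcyc by (intro Max_in) auto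
    then obtain r' where r': "r' < p" "w_max w = rotate r' w" using cyc_class_rot wne lenw by blast
    have rr: "r \<noteq> r'" using neq r r' by auto
    have occ: "occ_in u i j (rotate s w) (i + s + k * p)" if s: "s < p" "s + (k+1) * p \<le> L" for s k
    proof -
      let ?q = "i + s + k * p"
      have e: "?q + length (rotate s w) - 1 = ?q + p - 1" using lenw by simp
      have b: "?q + p - 1 \<le> j" using s i1 p0 unfolding L_def by (simp add: algebra_simps)
      have "factor u ?q (?q + p - 1) = rotate s w"
      proof (rule nth_equalityI)
        show "length (factor u ?q (?q + p - 1)) = length (rotate s w)"
          unfolding factor_def using b ju lenw p0 i1 by auto
        fix t assume "t < length (factor u ?q (?q + p - 1))"
        then have t: "t < p" unfolding factor_def using b ju p0 i1 by auto
        have "factor u ?q (?q + p - 1) ! t = u ! (?q - 1 + t)"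
          unfolding factor_def using t b ju p0 i1 by auto
        also have "\<dots> = v ! (s + k * p + t)"
          using vnth[of "s + k*p + t"] t s i1 by (simp add: algebra_simps)
        also have "\<dots> = v ! ((s + k * p + t) mod p)"
          using vmod[of "s + k*p + t"] t s by (simp add: algebra_simps)
        also have "(s + k * p + t) mod p = (s + t) mod p"
        proof -
          have "s + k * p + t = (s + t) + k * p" by simp
          then show ?thesis by (simp only: mod_mult_self1)
        qed
        also have "v ! ((s + t) mod p) = w ! ((s + t) mod p)" using wnth p0 by simp
        also have "\<dots> = rotate s w ! t" using nth_rotate[of t w s] t lenw by simp
        finally show "factor u ?q (?q + p - 1) ! t = rotate s w ! t" .
      qed
      then show ?thesis unfolding occ_in_def using e b by simp
    qed
    define m where "m = L div p"
    have mL: "m * p \<le> L" unfolding m_def by (simp add: mult.commute)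
    have Lm: "L < (m + 1) * p" unfolding m_def using p0
      by (metis add.commute dividend_less_div_times mult.commute mult_Suc_right plus_1_eq_Suc)
    define A where "A s = (\<lambda>k. i + s + k * p + p - 1) ` {..<m-2}" for s
    have Asub: "A s \<subseteq> between_occs u i j (rotate s w)" if "s < p" for s
    proof
      fix x assume "x \<in> A s"
      then obtain k where k: "k < m - 2" "x = i + s + k * p + p - 1" unfolding A_def by auto
      have "k + 2 \<le> m - 1" using k by simp
      then have "(k + 2) * p \<le> (m - 1) * p" by (rule mult_le_mono1)
      moreover have "(m - 1) * p + p = (m - 1 + 1) * p" by simp
      moreover have "m - 1 + 1 = m" using k by simp
      ultimately have "(k + 2) * p + p \<le> m * p" by simp
      then have "s + (k + 2) * p \<le> L" using that mL by linarith
      then have o1: "occ_in u i j (rotate s w) (i + s + k * p)"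
        and o2: "occ_in u i j (rotate s w) (i + s + (k+1) * p)"
        using occ[of s k] occ[of s "k+1"] that by (auto simp: algebra_simps)
      have "i + s + (k+1) * p = (i + s + k * p) + length (rotate s w)" using lenw by simp
      then show "x \<in> between_occs u i j (rotate s w)"
        unfolding between_occs_def using o1 o2 k lenw by (metis (mono_tags, lifting) length_rotate mem_Collect_eq)
    qed
    have Acard: "card (A s) = m - 2" for s
    proof -
      have "inj_on (\<lambda>k. i + s + k * p + p - 1) {..<m-2}" 
      proof (rule inj_onI)
        fix x y assume "i + s + x * p + p - 1 = i + s + y * p + p - 1"
        then have "x * p = y * p" using p0 by linarith
        then show "x = y" using p0 by simp
      qed
      then show ?thesis unfolding A_def by (simp add: card_image)
    qed
    have Adisj: "A r \<inter> A r' = {}"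
    proof (rule ccontr)
      assume "A r \<inter> A r' \<noteq> {}"
      then obtain k k' where "i + r + k * p + p - 1 = i + r' + k' * p + p - 1"
        unfolding A_def by auto
      then have "r + k * p = r' + k' * p" using p0 by simp
      then have "(r + k * p) mod p = (r' + k' * p) mod p" by simp
      then show False using r r' rr by simp
    qed
    have Hsub: "A r \<union> A r' \<subseteq> handles u i j"
      using H_def' neq Asub[OF r(1)] Asub[OF r'(1)] r r' by auto
    have Hfin: "finite (handles u i j)"
    proof -
      have "handles u i j \<subseteq> {..j}"
        unfolding H_def' between_occs_def occ_in_def using neq by auto
      then show ?thesis by (rule finite_subset) simp
    qed
    have "card (A r \<union> A r') = 2 * (m - 2)"
      using Adisj Acard by (simp add: card_Un_disjoint A_def)
    then have cH: "2 * (m - 2) \<le> card (handles u i j)"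
      using card_mono[OF Hfin Hsub] by simp
    have m2: "2 \<le> m" unfolding m_def using p2L p0
      by (metis div_le_mono mult.commute nonzero_mult_div_cancel_right less_not_refl2)
    have "run_exponent u i j = real L / real p"
      unfolding run_exponent_def L_def p_def v_def by simp
    also have "\<dots> \<le> real (m + 1)"
    proof -
      have "real L \<le> real ((m + 1) * p)" using Lm by (simp only: of_nat_le_iff less_imp_le)
      then have "real L \<le> real (m + 1) * real p" by (simp only: of_nat_mult)
      then show ?thesis using p0 by (simp add: divide_le_eq)
    qed
    finally have "\<lceil>run_exponent u i j\<rceil> \<le> int (m + 1)" by (simp add: ceiling_le_iff)
    then have "real_of_int \<lceil>run_exponent u i j\<rceil> \<le> real m + 1" by linarith
    moreover have "real m + 1 \<le> real (card (handles u i j)) / 2 + 3"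
      using cH m2 by (simp add: of_nat_diff)
    ultimately show "real_of_int \<lceil>run_exponent u i j\<rceil> \<le> real (card (handles u i j)) / 2 + 3"
      by linarith
  qed
qed

end
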